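(* For the complete graph $K_n$, let $V(n)$ denote the number of distinct vertices visited by the random basic walk on $K_n$ (from any fixed starting vertex and initial port). Then, as $n\to\infty$, the expected value of $V(n)$ is asymptotically at least $(1-1/e)\,n$; that is, $\liminf_{n\to\infty} \mathbb{E}[V(n)]/n \ge 1-1/e$.
   Context: Each undirected edge $\{v,w\}$ is regarded as two arcs $v\to w$ and $w\to v$. A labeling of $K_n$ assigns, at each vertex $v$, the port numbers $1,\dots,n-1$ bijectively to the $n-1$ arcs leaving $v$ (labels on $v\to w$ and $w\to v$ need not agree). In a random labeling these bijections are chosen uniformly at random, independently for different vertices. Given a labeling, a starting vertex $v_0$ and an initial port $\ell$, the basic walk leaves $v_0$ along the arc labeled $\ell$; thereafter, whenever it enters a vertex $v$ along an arc whose label is $i$, it leaves $v$ along the arc out of $v$ labeled $(i \bmod (n-1))+1$. The random basic walk is the basic walk for a random labeling. *)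

theory Defs
  imports Complex_Main "HOL-Library.Extended_Real"
begin

text \<open>Vertices of K_n are 0,...,n-1. A labeling lab assigns to the arc v -> w
  (v, w < n, v \<noteq> w) the port number lab v w at v; at each vertex v the map
  w \<mapsto> lab v w is a bijection from the other vertices onto {1..n-1}.
  Outside the arcs lab is fixed to 0, so the set of labelings is finite and is
  exactly the product of the per-vertex bijections.\<close>

definition labelings :: "nat \<Rightarrow> (nat \<Rightarrow> nat \<Rightarrow> nat) set" where
  "labelings n = {lab.
     (\<forall>v<n. bij_betw (lab v) ({..<n} - {v}) {1..n-1}) \<and>
     (\<forall>v w. (n \<le> v \<or> n \<le> w \<or> v = w) \<longrightarrow> lab v w = 0)}"

definition next_vertex :: "nat \<Rightarrow> (nat \<Rightarrow> nat \<Rightarrow> nat) \<Rightarrow> nat \<Rightarrow> nat \<Rightarrow> nat" where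
  "next_vertex n lab v i = (THE w. w < n \<and> w \<noteq> v \<and> lab v w = i)"

text \<open>State (v, j): the walk is at vertex v and will leave v along the arc labelled j.\<close>
primrec basic_walk :: "nat \<Rightarrow> (nat \<Rightarrow> nat \<Rightarrow> nat) \<Rightarrow> nat \<Rightarrow> nat \<Rightarrow> nat \<Rightarrow> nat \<times> nat" where
  "basic_walk n lab v0 l 0 = (v0, l)"
| "basic_walk n lab v0 l (Suc k) =
     (let (v, j) = basic_walk n lab v0 l k in (next_vertex n lab v j, (j mod (n - 1)) + 1))"

definition visited :: "nat \<Rightarrow> (nat \<Rightarrow> nat \<Rightarrow> nat) \<Rightarrow> nat \<Rightarrow> nat \<Rightarrow> nat set" where
  "visited n lab v0 l = {fst (basic_walk n lab v0 l k) | k. True}"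

definition expected_visited :: "nat \<Rightarrow> nat \<Rightarrow> nat \<Rightarrow> real" where
  "expected_visited n v0 l =
     (\<Sum>lab\<in>labelings n. real (card (visited n lab v0 l))) / real (card (labelings n))"

end

theory Submission imports Defs "HOL-Library.FuncSet" begin

definition sw :: "(nat \<Rightarrow> nat \<Rightarrow> nat) \<Rightarrow> nat \<Rightarrow> nat \<Rightarrow> nat \<Rightarrow> (nat \<Rightarrow> nat \<Rightarrow> nat)" where
  "sw lab u a b = lab(u := (lab u)(a := lab u b, b := lab u a))"

lemma sw_invol: "sw (sw lab u a b) u a b = lab"
  unfolding sw_def by (auto simp: fun_eq_iff)

lemma bw_Suc: "basic_walk n lab v0 l (Suc k) =
  (next_vertex n lab (fst (basic_walk n lab v0 l k)) (snd (basic_walk n lab v0 l k)),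
   snd (basic_walk n lab v0 l k) mod (n - 1) + 1)"
  by (simp add: split_def Let_def)

lemma nv_cong: "lab v = lab' v \<Longrightarrow> next_vertex n lab v j = next_vertex n lab' v j"
  unfolding next_vertex_def by simp

lemma nv_eq:
  assumes "lab \<in> labelings n" "v < n" "x < n" "x \<noteq> v" "lab v x = j"
  shows "next_vertex n lab v j = x"
proof -
  have inj: "inj_on (lab v) ({..<n} - {v})" using assms(1,2) unfolding labelings_def bij_betw_def by auto
  show ?thesis unfolding next_vertex_def
    apply (rule the_equality)
    using assms apply simp
    using inj assms by (auto dest: inj_onD)
qed

lemma nv_prop:
  assumes "lab \<in> labelings n" "v < n" "1 \<le> j" "j \<le> n - 1"
  shows "next_vertex n lab v j < n \<and> next_vertex n lab v j \<noteq> v \<and> lab v (next_vertex n lab v j) = j"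
proof -
  have "bij_betw (lab v) ({..<n} - {v}) {1..n-1}" using assms(1,2) unfolding labelings_def by auto
  then have "j \<in> lab v ` ({..<n} - {v})" using assms(3,4) by (auto simp: bij_betw_def)
  then obtain x where x: "x < n" "x \<noteq> v" "lab v x = j" by auto
  with nv_eq[OF assms(1,2) x] show ?thesis by simp
qed

lemma sw_in:
  assumes "lab \<in> labelings n" "u < n" "a < n" "a \<noteq> u" "b < n" "b \<noteq> u"
  shows "sw lab u a b \<in> labelings n"
proof -
  let ?D = "{..<n} - {u}"
  have bu: "bij_betw (lab u) ?D {1..n-1}" using assms(1,2) unfolding labelings_def by auto
  define \<tau> where "\<tau> x = (if x = a then b else if x = b then a else x)" for x
  have t: "bij_betw \<tau> ?D ?D"
    by (rule bij_betw_byWitness[where f'=\<tau>]) (use assms in \<open>auto simp: \<tau>_def\<close>)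
  have "bij_betw (lab u \<circ> \<tau>) ?D {1..n-1}" using bij_betw_trans[OF t bu] .
  moreover have "\<And>x. x \<in> ?D \<Longrightarrow> (lab u \<circ> \<tau>) x = ((lab u)(a := lab u b, b := lab u a)) x"
    by (auto simp: \<tau>_def)
  ultimately have bu': "bij_betw ((lab u)(a := lab u b, b := lab u a)) ?D {1..n-1}"
    using bij_betw_cong by blast
  show ?thesis using assms(1) bu' assms unfolding labelings_def sw_def by auto
qed

context
  fixes n v0 l :: nat
  assumes n2: "2 \<le> n" and v0: "v0 < n" and l1: "1 \<le> l" and l2: "l \<le> n - 1"
begin

lemma port: "snd (basic_walk n lab v0 l i) = (l - 1 + i) mod (n - 1) + 1"
proof (induction i)
  case 0
  then show ?case using l1 l2 n2 by simp
next
  case (Suc i)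
  then show ?case by (simp only: bw_Suc) (simp add: mod_Suc_eq)
qed

lemma port_bounds: "1 \<le> snd (basic_walk n lab v0 l i) \<and> snd (basic_walk n lab v0 l i) \<le> n - 1"
proof -
  have "(l - 1 + i) mod (n - 1) < n - 1" using n2 by simp
  then show ?thesis by (simp add: port)
qed

lemma port_distinct:
  assumes "i < k" "k < n - 1"
  shows "snd (basic_walk n lab v0 l i) \<noteq> snd (basic_walk n lab v0 l k)"
proof
  assume "snd (basic_walk n lab v0 l i) = snd (basic_walk n lab v0 l k)"
  then have e: "(l - 1 + i) mod (n - 1) = (l - 1 + k) mod (n - 1)" by (simp add: port)
  then have "(n - 1) dvd ((l - 1 + k) - (l - 1 + i))"
    using assms by (subst mod_eq_dvd_iff_nat[symmetric]) auto
  then have "(n - 1) dvd (k - i)" by simp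
  then show False using assms by (auto dest: dvd_imp_le)
qed

lemma walk_lt: "lab \<in> labelings n \<Longrightarrow> fst (basic_walk n lab v0 l i) < n"
proof (induction i)
  case 0
  then show ?case using v0 by simp
next
  case (Suc i)
  then show ?case using nv_prop[OF Suc.prems Suc.IH] port_bounds by (simp only: bw_Suc fst_conv)
qed

end

lemma finite_labelings: "finite (labelings n)"
proof -
  define F where "F = (\<lambda>lab::nat\<Rightarrow>nat\<Rightarrow>nat. restrict (\<lambda>v. restrict (lab v) {..<n}) {..<n})"
  have 1: "inj_on F (labelings n)"
  proof
    fix a b assume a: "a \<in> labelings n" and b: "b \<in> labelings n" and e: "F a = F b"
    show "a = b"
    proof (rule ext, rule ext)
      fix v w
      show "a v w = b v w"
      proof (cases "v < n \<and> w < n")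
        case True
        have "F a v = F b v" using e by simp
        then have "restrict (a v) {..<n} w = restrict (b v) {..<n} w" using True by (simp add: F_def)
        then show ?thesis using True by simp
      next
        case False
        then show ?thesis using a b unfolding labelings_def by auto
      qed
    qed
  qed
  have 2: "F ` labelings n \<subseteq> PiE {..<n} (\<lambda>_. PiE {..<n} (\<lambda>_. {..n}))"
  proof
    fix f assume "f \<in> F ` labelings n"
    then obtain lab where lab: "lab \<in> labelings n" and f: "f = F lab" by auto
    have "\<And>v w. v < n \<Longrightarrow> w < n \<Longrightarrow> lab v w \<le> n"
    proof -
      fix v w assume "v < n" "w < n"
      show "lab v w \<le> n"
      proof (cases "v = w")
        case True then show ?thesis using lab unfolding labelings_def by auto
      next
        case False
        then have "bij_betw (lab v) ({..<n} - {v}) {1..n-1}" using lab \<open>v < n\<close> unfolding labelings_def by auto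
        then have "lab v w \<in> {1..n-1}" using \<open>w < n\<close> False by (auto simp: bij_betw_def)
        then show ?thesis by auto
      qed
    qed
    then show "f \<in> PiE {..<n} (\<lambda>_. PiE {..<n} (\<lambda>_. {..n}))" unfolding f F_def by auto
  qed
  have 3: "finite (PiE {..<n} (\<lambda>_. PiE {..<n} (\<lambda>_. {..n::nat})))"
    by (intro finite_PiE) auto
  show ?thesis using inj_on_finite[OF 1 2 3] .
qed

lemma walk_agree:
  assumes "\<And>i. i < k \<Longrightarrow> next_vertex n lab' (fst (basic_walk n lab v0 l i)) (snd (basic_walk n lab v0 l i))
       = next_vertex n lab (fst (basic_walk n lab v0 l i)) (snd (basic_walk n lab v0 l i))"
  shows "i \<le> k \<Longrightarrow> basic_walk n lab' v0 l i = basic_walk n lab v0 l i"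
proof (induction i)
  case 0 then show ?case by simp
next
  case (Suc i)
  then have "basic_walk n lab' v0 l i = basic_walk n lab v0 l i" by simp
  then show ?case using assms[of i] Suc.prems by (simp only: bw_Suc; simp)
qed

definition Aset :: "nat \<Rightarrow> nat \<Rightarrow> nat \<Rightarrow> nat \<Rightarrow> nat \<Rightarrow> (nat \<Rightarrow> nat \<Rightarrow> nat) set" where
  "Aset n v0 l w k = {lab \<in> labelings n. \<forall>i\<le>k. fst (basic_walk n lab v0 l i) \<noteq> w}"


context
  fixes n v0 l :: nat
  assumes n2: "2 \<le> n" and v0: "v0 < n" and l1: "1 \<le> l" and l2: "l \<le> n - 1"
begin

lemma step:
  assumes w: "w < n" "w \<noteq> v0" and k: "Suc k < n"
  shows "card (Aset n v0 l w k) \<le> n * card (Aset n v0 l w k - Aset n v0 l w (Suc k))"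
proof -
  let ?A = "Aset n v0 l w k" and ?B = "Aset n v0 l w (Suc k)"
  define U where "U lab = fst (basic_walk n lab v0 l k)" for lab
  define T where "T lab = fst (basic_walk n lab v0 l (Suc k))" for lab
  define phi where "phi lab = sw lab (U lab) (T lab) w" for lab
  have key: "phi lab \<in> ?A - ?B \<and> (\<forall>i\<le>k. basic_walk n (phi lab) v0 l i = basic_walk n lab v0 l i)"
    if A: "lab \<in> ?A" for lab
  proof -
    from A have L: "lab \<in> labelings n" and nw: "\<forall>i\<le>k. fst (basic_walk n lab v0 l i) \<noteq> w"
      by (auto simp: Aset_def)
    let ?u = "U lab" let ?t = "T lab" let ?jk = "snd (basic_walk n lab v0 l k)"
    have u: "?u < n" using walk_lt[OF n2 v0 l1 l2 L] by (simp add: U_def)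
    have uw: "?u \<noteq> w" using nw by (simp add: U_def)
    have tdef: "?t = next_vertex n lab ?u ?jk" by (simp only: T_def U_def bw_Suc fst_conv)
    have tp: "?t < n \<and> ?t \<noteq> ?u \<and> lab ?u ?t = ?jk"
      using nv_prop[OF L u] port_bounds[OF n2 v0 l1 l2] tdef by simp
    have L': "phi lab \<in> labelings n" unfolding phi_def using sw_in[OF L u] tp w uw by auto
    have agree: "\<forall>i\<le>k. basic_walk n (phi lab) v0 l i = basic_walk n lab v0 l i"
    proof (intro allI impI)
      fix i assume "i \<le> k"
      then show "basic_walk n (phi lab) v0 l i = basic_walk n lab v0 l i"
      proof (rule walk_agree[rotated])
        fix i assume i: "i < k"
        let ?vi = "fst (basic_walk n lab v0 l i)" let ?ji = "snd (basic_walk n lab v0 l i)"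
        show "next_vertex n (phi lab) ?vi ?ji = next_vertex n lab ?vi ?ji"
        proof (cases "?vi = ?u")
          case False
          then show ?thesis by (intro nv_cong) (simp add: phi_def sw_def)
        next
          case True
          define x where "x = next_vertex n lab ?vi ?ji"
          have vi: "?vi < n" using walk_lt[OF n2 v0 l1 l2 L] .
          have xp: "x < n \<and> x \<noteq> ?vi \<and> lab ?vi x = ?ji"
            using nv_prop[OF L vi] port_bounds[OF n2 v0 l1 l2] x_def by simp
          have "fst (basic_walk n lab v0 l (Suc i)) = x" by (simp only: x_def bw_Suc fst_conv)
          then have xw: "x \<noteq> w" using nw i by (metis Suc_leI)
          have "?ji \<noteq> ?jk" using port_distinct[OF n2 v0 l1 l2 i] k by simp
          then have xt: "x \<noteq> ?t" using tp xp True by auto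
          have "phi lab ?vi x = ?ji" using xp xw xt True by (simp add: phi_def sw_def)
          then show ?thesis using nv_eq[OF L' vi] xp x_def by simp
        qed
      qed
    qed
    have "phi lab ?u w = ?jk" using tp by (simp add: phi_def sw_def)
    then have "next_vertex n (phi lab) ?u ?jk = w" using nv_eq[OF L' u w(1) uw[symmetric]] by simp
    then have "T (phi lab) = w" using agree[rule_format, of k]
      by (simp only: T_def U_def bw_Suc fst_conv; simp)
    then have "phi lab \<notin> ?B" by (auto simp: Aset_def T_def)
    moreover have "phi lab \<in> ?A" using L' agree nw by (auto simp: Aset_def)
    ultimately show ?thesis using agree by blast
  qed
  define g where "g lab = (phi lab, T lab)" for lab
  have inj: "inj_on g ?A"
  proof
    fix a b assume a: "a \<in> ?A" and b: "b \<in> ?A" and e: "g a = g b"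
    then have p: "phi a = phi b" and t: "T a = T b" by (auto simp: g_def)
    have "U a = fst (basic_walk n (phi a) v0 l k)" using key[OF a] by (simp add: U_def)
    also have "\<dots> = U b" using key[OF b] p by (simp add: U_def)
    finally have "U a = U b" .
    then have "sw (phi a) (U a) (T a) w = sw (phi b) (U b) (T b) w" using p t by simp
    then show "a = b" by (simp add: phi_def sw_invol)
  qed
  have sub: "g ` ?A \<subseteq> (?A - ?B) \<times> {..<n}"
  proof
    fix y assume "y \<in> g ` ?A"
    then obtain lab where lab: "lab \<in> ?A" and y: "y = g lab" by auto
    have "T lab < n" unfolding T_def using walk_lt[OF n2 v0 l1 l2, of lab "Suc k"] lab by (simp add: Aset_def del: basic_walk.simps)
    then show "y \<in> (?A - ?B) \<times> {..<n}" using key[OF lab] y by (simp add: g_def)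
  qed
  have fin: "finite ((?A - ?B) \<times> {..<n})"
    using finite_labelings by (auto simp: Aset_def intro: finite_subset)
  have "card ?A = card (g ` ?A)" using card_image[OF inj] by simp
  also have "\<dots> \<le> card ((?A - ?B) \<times> {..<n})" using card_mono[OF fin sub] .
  also have "\<dots> = n * card (?A - ?B)" by (simp add: card_cartesian_product)
  finally show ?thesis .
qed

end

lemma labelings_ne: "labelings n \<noteq> {}"
proof -
  define lab0 where "lab0 v w = (if v < n \<and> w < n \<and> v \<noteq> w then (if w < v then w + 1 else w) else 0)" for v w :: nat
  have "bij_betw (lab0 v) ({..<n} - {v}) {1..n-1}" if v: "v < n" for v
  proof (rule bij_betw_imageI)
    show "inj_on (lab0 v) ({..<n} - {v})"
      by (rule inj_onI) (use v in \<open>auto simp: lab0_def split: if_splits\<close>)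
    show "lab0 v ` ({..<n} - {v}) = {1..n - 1}"
    proof
      show "lab0 v ` ({..<n} - {v}) \<subseteq> {1..n - 1}" using v by (auto simp: lab0_def)
      show "{1..n - 1} \<subseteq> lab0 v ` ({..<n} - {v})"
      proof
        fix j assume j: "j \<in> {1..n-1}"
        show "j \<in> lab0 v ` ({..<n} - {v})"
        proof (cases "j \<le> v")
          case True
          then have "lab0 v (j - 1) = j" using j v by (auto simp: lab0_def)
          moreover have "j - 1 \<in> {..<n} - {v}" using j True by auto
          ultimately show ?thesis by (metis image_eqI)
        next
          case False
          then have "lab0 v j = j" using j v by (auto simp: lab0_def)
          moreover have "j \<in> {..<n} - {v}" using j False by auto
          ultimately show ?thesis by (metis image_eqI)
        qed
      qed
    qed
  qed
  then have "lab0 \<in> labelings n" unfolding labelings_def by (auto simp: lab0_def)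
  then show ?thesis by auto
qed

context
  fixes n v0 l :: nat
  assumes n2: "2 \<le> n" and v0: "v0 < n" and l1: "1 \<le> l" and l2: "l \<le> n - 1"
begin

lemma decay:
  assumes w: "w < n" "w \<noteq> v0"
  shows "k \<le> n - 1 \<Longrightarrow> real (card (Aset n v0 l w k)) \<le> (1 - 1 / real n) ^ k * real (card (labelings n))"
proof (induction k)
  case 0
  have "Aset n v0 l w 0 = labelings n" using w by (auto simp: Aset_def)
  then show ?case by simp
next
  case (Suc k)
  have sub: "Aset n v0 l w (Suc k) \<subseteq> Aset n v0 l w k" unfolding Aset_def using le_SucI by blast
  have fin: "finite (Aset n v0 l w k)" using finite_labelings by (auto simp: Aset_def intro: finite_subset)
  have "card (Aset n v0 l w k) \<le> n * card (Aset n v0 l w k - Aset n v0 l w (Suc k))"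
    using step[OF n2 v0 l1 l2 w] Suc.prems n2 by simp
  also have "card (Aset n v0 l w k - Aset n v0 l w (Suc k)) = card (Aset n v0 l w k) - card (Aset n v0 l w (Suc k))"
    using card_Diff_subset[OF finite_subset[OF sub fin] sub] .
  finally have c: "real (card (Aset n v0 l w k)) \<le> real n * (real (card (Aset n v0 l w k)) - real (card (Aset n v0 l w (Suc k))))"
    using card_mono[OF fin sub] by (metis of_nat_diff of_nat_le_iff of_nat_mult)
  have np: "real n > 0" using n2 by simp
  have "real (card (Aset n v0 l w (Suc k))) \<le> (1 - 1 / real n) * real (card (Aset n v0 l w k))"
    using c np by (simp add: field_simps)
  also have "\<dots> \<le> (1 - 1 / real n) * ((1 - 1 / real n) ^ k * real (card (labelings n)))"
    using Suc np by (intro mult_left_mono) (auto simp: field_simps)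
  finally show ?case by simp
qed

lemma visited_sub: "lab \<in> labelings n \<Longrightarrow> visited n lab v0 l \<subseteq> {..<n}"
  using walk_lt[OF n2 v0 l1 l2] unfolding visited_def by auto

lemma not_A_visited:
  assumes "lab \<in> labelings n - Aset n v0 l w (n - 1)"
  shows "w \<in> visited n lab v0 l"
  using assms unfolding Aset_def visited_def by auto

lemma main_bound: "expected_visited n v0 l \<ge> real n * (1 - exp (-1))"
proof -
  let ?L = "labelings n"
  let ?c = "real (card ?L)"
  let ?q = "1 - 1 / real n :: real"
  have np: "real n > 0" using n2 by simp
  have finL: "finite ?L" by (rule finite_labelings)
  have cpos: "?c > 0" using finL labelings_ne by (simp add: card_gt_0_iff)
  have cardv: "real (card (visited n lab v0 l)) = (\<Sum>w<n. if w \<in> visited n lab v0 l then 1 else 0)"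
    if "lab \<in> ?L" for lab
  proof -
    have "visited n lab v0 l = {..<n} \<inter> visited n lab v0 l" using visited_sub[OF that] by auto
    then have "real (card (visited n lab v0 l)) = (\<Sum>w\<in>{..<n} \<inter> visited n lab v0 l. 1)" by simp
    also have "\<dots> = (\<Sum>w<n. if w \<in> visited n lab v0 l then 1 else 0)"
      by (rule sum.inter_restrict) simp
    finally show ?thesis .
  qed
  define T where "T w = (\<Sum>lab\<in>?L. if w \<in> visited n lab v0 l then 1 else 0 :: real)" for w
  have tot: "(\<Sum>lab\<in>?L. real (card (visited n lab v0 l))) = (\<Sum>w<n. T w)"
    unfolding T_def using cardv by (simp add: sum.swap[of _ "{..<n}"])
  have Tv0: "T v0 = ?c"
  proof -
    have "v0 \<in> visited n lab v0 l" for lab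
      unfolding visited_def by (auto intro!: exI[of _ 0])
    then show ?thesis by (simp add: T_def)
  qed
  have Tw: "T w \<ge> ?c * (1 - ?q ^ (n - 1))" if w: "w < n" "w \<noteq> v0" for w
  proof -
    let ?A = "Aset n v0 l w (n - 1)"
    have sub: "?A \<subseteq> ?L" by (auto simp: Aset_def)
    have "T w \<ge> (\<Sum>lab\<in>?L - ?A. 1)"
    proof -
      have "(\<Sum>lab\<in>?L - ?A. 1::real) = (\<Sum>lab\<in>?L - ?A. if w \<in> visited n lab v0 l then 1 else 0)"
        using not_A_visited by (intro sum.cong) auto
      also have "\<dots> \<le> T w" unfolding T_def using finL by (intro sum_mono2) auto
      finally show ?thesis .
    qed
    moreover have "(\<Sum>lab\<in>?L - ?A. 1::real) = ?c - real (card ?A)"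
      using card_Diff_subset[OF finite_subset[OF sub finL] sub] card_mono[OF finL sub]
      by (simp add: of_nat_diff)
    moreover have "real (card ?A) \<le> ?q ^ (n - 1) * ?c" using decay[OF w] by simp
    ultimately show ?thesis by (simp add: algebra_simps)
  qed
  have "(\<Sum>w<n. T w) = T v0 + (\<Sum>w\<in>{..<n} - {v0}. T w)"
    using v0 by (simp add: sum.remove)
  also have "\<dots> \<ge> ?c + (\<Sum>w\<in>{..<n} - {v0}. ?c * (1 - ?q ^ (n - 1)))"
    using Tv0 Tw by (intro add_mono sum_mono) auto
  finally have S: "(\<Sum>lab\<in>?L. real (card (visited n lab v0 l))) \<ge> ?c + real (n - 1) * (?c * (1 - ?q ^ (n - 1)))"
    using tot v0 by (simp add: card_Diff_singleton)
  have nq: "real (n - 1) = real n * ?q" using n2 np by (simp add: field_simps of_nat_diff)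
  have E: "real (n - 1) * ?q ^ (n - 1) = real n * ?q ^ n"
    using n2 nq by (metis (no_types, lifting) Suc_diff_1 less_le_trans mult.assoc pos2 power_Suc)
  have "?c + real (n-1) * (?c * (1 - ?q^(n-1))) = ?c * (1 + real (n-1)) - ?c * (real (n-1) * ?q^(n-1))"
    by (simp add: algebra_simps)
  also have "\<dots> = ?c * (real n - real n * ?q ^ n)" using E n2 by (simp add: of_nat_diff algebra_simps)
  finally have S2: "(\<Sum>lab\<in>?L. real (card (visited n lab v0 l))) \<ge> ?c * (real n - real n * ?q ^ n)"
    using S by simp
  have qe: "?q ^ n \<le> exp (-1)"
  proof -
    have "?q \<le> exp (- 1 / real n)" using exp_ge_add_one_self[of "- 1 / real n"] by simp
    then have "?q ^ n \<le> exp (- 1 / real n) ^ n" using np by (intro power_mono) (auto simp: field_simps)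
    also have "\<dots> = exp (real n * (- 1 / real n))" by (metis exp_of_nat_mult)
    also have "\<dots> = exp (-1)" using np by simp
    finally show ?thesis .
  qed
  have "?c * (real n * (1 - exp (-1))) \<le> ?c * (real n - real n * ?q ^ n)"
    using qe cpos np by (intro mult_left_mono) (auto simp: algebra_simps)
  with S2 have "?c * (real n * (1 - exp (-1))) \<le> (\<Sum>lab\<in>?L. real (card (visited n lab v0 l)))" by linarith
  then show ?thesis unfolding expected_visited_def using cpos by (simp add: field_simps)
qed

end

theorem theorem5p1:
  fixes s p :: "nat \<Rightarrow> nat"
  assumes "\<And>n. 2 \<le> n \<Longrightarrow> s n < n"
    and "\<And>n. 2 \<le> n \<Longrightarrow> 1 \<le> p n \<and> p n \<le> n - 1"
  shows "liminf (\<lambda>n. ereal (expected_visited n (s n) (p n) / real n)) \<ge> ereal (1 - exp (-1))"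
proof (rule Liminf_bounded)
  show "\<forall>\<^sub>F n in sequentially. ereal (1 - exp (- 1)) \<le> ereal (expected_visited n (s n) (p n) / real n)"
    unfolding eventually_sequentially
  proof (intro exI allI impI)
    fix n :: nat assume n: "2 \<le> n"
    have "expected_visited n (s n) (p n) \<ge> real n * (1 - exp (-1))"
      using main_bound[OF n assms(1)[OF n]] assms(2)[OF n] by auto
    then have "1 - exp (-1) \<le> expected_visited n (s n) (p n) / real n"
      using n by (simp add: field_simps)
    then show "ereal (1 - exp (- 1)) \<le> ereal (expected_visited n (s n) (p n) / real n)" by simp
  qed
qed

end
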